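(* Let $\rho\in\mathrm{Rect}^\ast(n)$ with $\rho\notin\mathcal B_n$ (a genuine rear ear), and let $\sigma\in\mathrm{Rect}^\ast(n)$ with $d_{\mathrm{sup}}(\rho,\sigma)<\infty$. Then every support corridor between $\rho$ and $\sigma$ starts (at its end in $A(\rho)$) at a vertex whose local simplex dimension in $G_n$ is at least $3$.
   Context: The partition graph $G_n$ has as vertices the integer partitions of $n$; two partitions are adjacent if one is obtained from the other by a single elementary unit transfer followed by reordering: decrease one part by $1$ and either increase a different part by $1$ or create a new part equal to $1$, then delete a part that became $0$ and sort in nonincreasing order (the result being different from the original). $\mathrm{Rect}^\ast(n)=\{(a^b):ab=n,\ a,b\ge2\}$, where $(a^b)$ has $b$ parts equal to $a$. The boundary framework is $\mathcal B_n=\mathcal M_n\cup\mathcal L_n\cup\mathcal R_n$ with $\mathcal M_n=\{(n-k,1^k):0\le k\le n-1\}$, $\mathcal L_n=\{(n-k,k):1\le k\le\lfloor n/2\rfloor\}$, and $\mathcal R_n$ the set of conjugates of elements of $\mathcal L_n$. For $\rho=(a^b)\in\mathrm{Rect}^\ast(n)$ the attachment pair is $A(\rho)=\{(a+1,a^{\,b-2},a-1),\ (a^{\,b-1},a-1,1)\}$ (with $(a+1,a-1)$ as the first element when $b=2$). The support distance $d_{\mathrm{sup}}(\rho,\sigma)$ is the minimum of the graph distances in $G_n\setminus\mathrm{Rect}^\ast(n)$ between a vertex of $A(\rho)$ and a vertex of $A(\sigma)$ ($\infty$ if no such path exists). A support corridor between $\rho$ and $\sigma$ is a shortest path in $G_n\setminus\mathrm{Rect}^\ast(n)$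 joining some vertex of $A(\rho)$ to some vertex of $A(\sigma)$ (of length $d_{\mathrm{sup}}(\rho,\sigma)$). The local simplex dimension of a vertex $v$ is $m-1$ where $m$ is the largest size of a clique of $G_n$ containing $v$. *)

theory Defs
  imports Main "HOL-Library.Extended_Nat"
begin

definition partitions :: "nat \<Rightarrow> nat list set" where
  "partitions n = {p. sorted_wrt (\<ge>) p \<and> 0 \<notin> set p \<and> sum_list p = n}"

definition normalize :: "nat list \<Rightarrow> nat list" where
  "normalize xs = rev (sort (filter (\<lambda>x. x \<noteq> 0) xs))"

definition unit_transfer :: "nat list \<Rightarrow> nat list \<Rightarrow> bool" where
  "unit_transfer p q \<longleftrightarrow> q \<noteq> p \<and>
     (\<exists>i < length p. 1 \<le> p ! i \<and>
        ((\<exists>j < length p. j \<noteq> i \<and> q = normalize ((p[i := p ! i - 1])[j := p ! j + 1]))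
         \<or> q = normalize (p[i := p ! i - 1] @ [1])))"

definition adj :: "nat \<Rightarrow> nat list \<Rightarrow> nat list \<Rightarrow> bool" where
  "adj n p q \<longleftrightarrow> p \<in> partitions n \<and> q \<in> partitions n \<and> (unit_transfer p q \<or> unit_transfer q p)"

definition Rect :: "nat \<Rightarrow> nat list set" where
  "Rect n = {replicate b a | a b. a * b = n \<and> 2 \<le> a \<and> 2 \<le> b}"

definition conj :: "nat list \<Rightarrow> nat list" where
  "conj p = map (\<lambda>i. length (filter (\<lambda>x. i < x) p)) [0..<(if p = [] then 0 else hd p)]"

definition Mset :: "nat \<Rightarrow> nat list set" where
  "Mset n = {(n - k) # replicate k 1 | k. k \<le> n - 1}"

definition Lset :: "nat \<Rightarrow> nat list set" where
  "Lset n = {[n - k, k] | k. 1 \<le> k \<and> k \<le> n div 2}"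

definition Rset :: "nat \<Rightarrow> nat list set" where
  "Rset n = conj ` Lset n"

definition Bframe :: "nat \<Rightarrow> nat list set" where
  "Bframe n = Mset n \<union> Lset n \<union> Rset n"

definition attach :: "nat list \<Rightarrow> nat list set" where
  "attach rho = (let a = hd rho; b = length rho in
     {[a + 1] @ replicate (b - 2) a @ [a - 1], replicate (b - 1) a @ [a - 1, 1]})"

definition avoid_path :: "nat \<Rightarrow> nat list list \<Rightarrow> bool" where
  "avoid_path n xs \<longleftrightarrow> xs \<noteq> [] \<and> set xs \<subseteq> partitions n - Rect n \<and> successively (adj n) xs"

text \<open>Support distance (\<infinity> if no path exists).\<close>
definition dsup :: "nat \<Rightarrow> nat list \<Rightarrow> nat list \<Rightarrow> enat" where
  "dsup n rho sigma = (INF xs \<in> {xs. avoid_path n xs \<and> hd xs \<in> attach rho \<and> last xs \<in> attach sigma}.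
                          enat (length xs - 1))"

definition support_corridor :: "nat \<Rightarrow> nat list \<Rightarrow> nat list \<Rightarrow> nat list list \<Rightarrow> bool" where
  "support_corridor n rho sigma xs \<longleftrightarrow> avoid_path n xs \<and> hd xs \<in> attach rho \<and> last xs \<in> attach sigma
     \<and> enat (length xs - 1) = dsup n rho sigma"

definition clique :: "nat \<Rightarrow> nat list set \<Rightarrow> bool" where
  "clique n S \<longleftrightarrow> finite S \<and> S \<subseteq> partitions n \<and> (\<forall>x\<in>S. \<forall>y\<in>S. x \<noteq> y \<longrightarrow> adj n x y)"

definition local_simplex_dim :: "nat \<Rightarrow> nat list \<Rightarrow> nat" where
  "local_simplex_dim n v = Max {card S | S. clique n S \<and> v \<in> S} - 1"

end

theory Submission
  imports Defs "HOL-Library.Multiset"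
begin


lemma normalize_eqI:
  assumes "q \<in> partitions n" "mset q = mset (filter (\<lambda>x. x \<noteq> 0) xs)"
  shows "normalize xs = q"
proof -
  have s: "sorted (rev q)" using assms(1) by (simp add: partitions_def sorted_wrt_rev)
  have "sort (filter (\<lambda>x. x \<noteq> 0) xs) = rev q"
    by (rule properties_for_sort) (use assms(2) s in auto)
  then show ?thesis unfolding normalize_def by simp
qed

lemma adjA:
  fixes C :: "nat multiset"
  assumes p: "p \<in> partitions n" and q: "q \<in> partitions n" and x: "x \<ge> 2" and y: "y \<ge> 1"
    and mp: "mset p = C + {#x, y#}" and mq: "mset q = C + {#x - 1, y + 1#}" and ne: "q \<noteq> p"
  shows "adj n p q"
proof -
  have "x \<in># mset p" using mp by simp
  then have "x \<in> set p" by simp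
  then obtain i where i: "i < length p" "p ! i = x" by (metis in_set_conv_nth)
  have mi: "mset (p[i := 0]) = add_mset 0 (C + {#y#})" using mset_update[OF i(1), of 0] i mp by simp
  then have "y \<in># mset (p[i := 0])" by simp
  then have "y \<in> set (p[i := 0])" by simp
  then obtain j where j: "j < length p" "p[i:=0] ! j = y" by (metis in_set_conv_nth length_list_update)
  have ji: "j \<noteq> i" using j i y by auto
  have pj: "p ! j = y" using j ji by simp
  have nz: "0 \<notin> set p" using p by (simp add: partitions_def)
  let ?r = "(p[i := p ! i - 1])[j := p ! j + 1]"
  have "set ?r \<subseteq> insert (x - 1) (insert (y+1) (set p))"
    using set_update_subset_insert[of p i "x - 1"] set_update_subset_insert[of "p[i := x - 1]" j "y+1"] i pj by auto
  then have "0 \<notin> set ?r" using x nz by auto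
  then have "filter (\<lambda>x. x \<noteq> 0) ?r = ?r" by (metis (mono_tags, lifting) filter_id_conv)
  moreover have "mset ?r = C + {#x - 1, y + 1#}"
    using mset_update[of j "p[i := p ! i - 1]"] mset_update[OF i(1), of "x - 1"] i j ji pj mp by simp
  ultimately have "mset q = mset (filter (\<lambda>x. x \<noteq> 0) ?r)" using mq by simp
  then have "normalize ?r = q" by (rule normalize_eqI[OF q])
  then have "unit_transfer p q" unfolding unit_transfer_def using ne i j ji x by auto
  then show ?thesis using p q by (simp add: adj_def)
qed

lemma adjB:
  fixes C :: "nat multiset"
  assumes p: "p \<in> partitions n" and q: "q \<in> partitions n" and x: "x \<ge> 2"
    and mp: "mset p = C + {#x#}" and mq: "mset q = C + {#x - 1, 1#}" and ne: "q \<noteq> p"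
  shows "adj n p q"
proof -
  have "x \<in># mset p" using mp by simp
  then have "x \<in> set p" by simp
  then obtain i where i: "i < length p" "p ! i = x" by (metis in_set_conv_nth)
  have nz: "0 \<notin> set p" using p by (simp add: partitions_def)
  let ?r = "p[i := p ! i - 1] @ [1]"
  have "set ?r \<subseteq> insert (x - 1) (insert 1 (set p))"
    using set_update_subset_insert[of p i "x - 1"] i by auto
  then have "0 \<notin> set ?r" using x nz by auto
  then have "filter (\<lambda>x. x \<noteq> 0) ?r = ?r" by (metis (mono_tags, lifting) filter_id_conv)
  moreover have "mset ?r = C + {#x - 1, 1#}"
    using mset_update[OF i(1), of "x - 1"] i mp by simp
  ultimately have "mset q = mset (filter (\<lambda>x. x \<noteq> 0) ?r)" using mq by simp
  then have "normalize ?r = q" by (rule normalize_eqI[OF q])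
  then have "unit_transfer p q" unfolding unit_transfer_def using ne i x by auto
  then show ?thesis using p q by (simp add: adj_def)
qed



lemma len_le_sum: "0 \<notin> set p \<Longrightarrow> length p \<le> sum_list (p::nat list)"
  by (induction p) auto

lemma finite_partitions: "finite (partitions n)"
proof -
  have "partitions n \<subseteq> {xs. set xs \<subseteq> {0..n} \<and> length xs \<le> n}"
    using len_le_sum member_le_sum_list by (fastforce simp: partitions_def)
  then show ?thesis using finite_lists_length_le[of "{0..n}" n] finite_subset by blast
qed

lemma dim_ge:
  assumes "clique n S" "v \<in> S" "card S = 4"
  shows "3 \<le> local_simplex_dim n v"
proof -
  let ?A = "{card S | S. clique n S \<and> v \<in> S}"
  have "?A \<subseteq> {..card (partitions n)}"
    using finite_partitions by (auto simp: clique_def intro: card_mono)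
  then have "finite ?A" using finite_subset by blast
  moreover have "4 \<in> ?A" using assms by auto
  ultimately have "4 \<le> Max ?A" by (rule Max_ge)
  then show ?thesis unfolding local_simplex_dim_def by simp
qed

lemma rect_shape:
  assumes "rho \<in> Rect n" "rho \<notin> Bframe n"
  shows "\<exists>m k. rho = replicate (k+3) (m+3) \<and> n = (m+3)*(k+3)"
proof -
  obtain a b where ab: "rho = replicate b a" "a * b = n" "2 \<le> a" "2 \<le> b"
    using assms(1) by (auto simp: Rect_def)
  have "b \<noteq> 2"
  proof
    assume b2: "b = 2"
    have r: "rho = [a, a]" using ab b2 by (simp add: numeral_2_eq_2)
    have n2: "n = 2 * a" using ab b2 by simp
    have "rho \<in> Lset n" using r n2 ab unfolding Lset_def
      by (intro CollectI exI[of _ a]) auto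
    then show False using assms(2) by (simp add: Bframe_def)
  qed
  moreover have "a \<noteq> 2"
  proof
    assume a2: "a = 2"
    have "[b, b] \<in> Lset n" using ab a2 unfolding Lset_def
      by (intro CollectI exI[of _ b]) auto
    moreover have "conj [b, b] = rho"
    proof -
      have "conj [b,b] = map (\<lambda>i. 2) [0..<b]" unfolding conj_def by (auto intro: map_cong)
      also have "\<dots> = replicate b 2" by (simp add: map_replicate_const)
      finally show ?thesis using ab a2 by simp
    qed
    ultimately have "rho \<in> Rset n" unfolding Rset_def by force
    then show False using assms(2) by (simp add: Bframe_def)
  qed
  ultimately have "a \<ge> 3" "b \<ge> 3" using ab by auto
  then show ?thesis using ab
    by (intro exI[of _ "a - 3"] exI[of _ "b - 3"]) auto
qed



lemma adj_sym: "adj n p q \<Longrightarrow> adj n q p" by (auto simp: adj_def)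

lemma partI: "sorted_wrt (\<ge>) p \<Longrightarrow> 0 \<notin> set p \<Longrightarrow> sum_list p = n \<Longrightarrow> p \<in> partitions n"
  by (simp add: partitions_def)

lemma sorted_wrt_rep[simp]: "sorted_wrt (\<lambda>x y. y \<le> (x::nat)) (replicate k c)"
  by (induction k) auto

lemma clique4:
  assumes "a \<in> partitions n" "b \<in> partitions n" "c \<in> partitions n" "d \<in> partitions n"
   "adj n a b" "adj n a c" "adj n a d" "adj n b c" "adj n b d" "adj n c d"
  shows "clique n {a,b,c,d}"
  using assms adj_sym unfolding clique_def by auto

context fixes m k n :: nat assumes n: "n = (m+3)*(k+3)"
begin

definition "v1 = (m+4) # replicate (k+1) (m+3) @ [m+2]"
definition "q1 = replicate (k+2) (m+3) @ [m+2, 1]"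
definition "q2 = (m+4) # replicate k (m+3) @ [m+2, m+2, 1]"
definition "q3 = (m+4) # replicate (k+1) (m+3) @ [m+1, 1]"
definition "r2 = replicate (k+1) (m+3) @ [m+2, m+2, 2]"
definition "r3 = replicate (k+1) (m+3) @ [m+2, m+2, 1, 1]"

lemma parts: "v1 \<in> partitions n" "q1 \<in> partitions n" "q2 \<in> partitions n" "q3 \<in> partitions n"
  "r2 \<in> partitions n" "r3 \<in> partitions n"
  unfolding v1_def q1_def q2_def q3_def r2_def r3_def
  by (rule partI; auto simp: sorted_wrt_append sum_list_replicate n algebra_simps)+

lemma ne: "v1 \<noteq> q1" "v1 \<noteq> q2" "v1 \<noteq> q3" "q1 \<noteq> q2" "q1 \<noteq> q3" "q2 \<noteq> q3"
  "q1 \<noteq> r2" "q1 \<noteq> r3" "q2 \<noteq> r2" "q2 \<noteq> r3" "r2 \<noteq> r3"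
  unfolding v1_def q1_def q2_def q3_def r2_def r3_def
  subgoal by (auto dest!: arg_cong[where f=length])
  subgoal by (auto dest!: arg_cong[where f=length])
  subgoal by (auto dest!: arg_cong[where f=length])
  subgoal by (auto dest!: arg_cong[where f=hd])
  subgoal by (auto dest!: arg_cong[where f=hd])
  subgoal by (auto dest!: arg_cong[where f="\<lambda>l. count (mset l) (m+2)"])
  subgoal by (auto dest!: arg_cong[where f="\<lambda>l. count (mset l) (m+2)"])
  subgoal by (auto dest!: arg_cong[where f=length])
  subgoal by (auto dest!: arg_cong[where f=hd])
  subgoal by (auto dest!: arg_cong[where f=length])
  subgoal by (auto dest!: arg_cong[where f=length])
  done

lemma adjs: "adj n v1 q1" "adj n v1 q2" "adj n v1 q3" "adj n q1 q2" "adj n q1 q3" "adj n q2 q3"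
  "adj n q1 r2" "adj n q1 r3" "adj n q2 r2" "adj n q2 r3" "adj n r2 r3"
  subgoal by (rule adjB[OF parts(1) parts(2), where x="m+4" and C="add_mset (m+2) (replicate_mset (k+1) (m+3))"])
     (use ne in \<open>auto simp: v1_def q1_def\<close>)
  subgoal by (rule adjB[OF parts(1) parts(3), where x="m+3" and C="add_mset (m+4) (add_mset (m+2) (replicate_mset k (m+3)))"])
     (use ne in \<open>auto simp: v1_def q2_def\<close>)
  subgoal by (rule adjB[OF parts(1) parts(4), where x="m+2" and C="add_mset (m+4) (replicate_mset (k+1) (m+3))"])
     (use ne in \<open>auto simp: v1_def q3_def\<close>)
  subgoal by (rule adjA[OF parts(2) parts(3), where x="m+3" and y="m+3" and C="add_mset (m+2) (add_mset 1 (replicate_mset k (m+3)))"])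
     (use ne in \<open>auto simp: q1_def q2_def\<close>)
  subgoal by (rule adjA[OF parts(2) parts(4), where x="m+2" and y="m+3" and C="add_mset 1 (replicate_mset (k+1) (m+3))"])
     (use ne in \<open>auto simp: q1_def q3_def\<close>)
  subgoal by (rule adjA[OF parts(3) parts(4), where x="m+2" and y="m+2" and C="add_mset (m+4) (add_mset 1 (replicate_mset k (m+3)))"])
     (use ne in \<open>auto simp: q2_def q3_def\<close>)
  subgoal by (rule adjA[OF parts(2) parts(5), where x="m+3" and y="1" and C="add_mset (m+2) (replicate_mset (k+1) (m+3))"])
     (use ne in \<open>auto simp: q1_def r2_def\<close>)
  subgoal by (rule adjB[OF parts(2) parts(6), where x="m+3" and C="add_mset (m+2) (add_mset 1 (replicate_mset (k+1) (m+3)))"])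
     (use ne in \<open>auto simp: q1_def r3_def\<close>)
  subgoal by (rule adjA[OF parts(3) parts(5), where x="m+4" and y="1" and C="add_mset (m+2) (add_mset (m+2) (replicate_mset k (m+3)))"])
     (use ne in \<open>auto simp: q2_def r2_def numeral_2_eq_2 add.commute\<close>)
  subgoal by (rule adjB[OF parts(3) parts(6), where x="m+4" and C="add_mset (m+2) (add_mset (m+2) (add_mset 1 (replicate_mset k (m+3))))"])
     (use ne in \<open>auto simp: q2_def r3_def\<close>)
  subgoal by (rule adjB[OF parts(5) parts(6), where x="2" and C="add_mset (m+2) (add_mset (m+2) (replicate_mset (k+1) (m+3)))"])
     (use ne in \<open>auto simp: r2_def r3_def\<close>)
  done

end

theorem corollary4p8:
  fixes n :: nat and rho sigma :: "nat list" and xs :: "nat list list"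
  assumes "rho \<in> Rect n" and "rho \<notin> Bframe n"
    and "sigma \<in> Rect n" and "dsup n rho sigma < \<infinity>"
    and "support_corridor n rho sigma xs"
  shows "3 \<le> local_simplex_dim n (hd xs)"
proof -
  obtain m k where rho: "rho = replicate (k+3) (m+3)" and n: "n = (m+3)*(k+3)"
    using rect_shape[OF assms(1,2)] by blast
  have att: "attach rho = {v1 m k, q1 m k}"
    by (simp add: attach_def rho v1_def q1_def Let_def add.commute)
  have "hd xs \<in> attach rho" using assms(5) by (simp add: support_corridor_def)
  then have "hd xs = v1 m k \<or> hd xs = q1 m k" using att by auto
  then show ?thesis
  proof
    assume h: "hd xs = v1 m k"
    have "clique n {v1 m k, q1 m k, q2 m k, q3 m k}"
      using n by (intro clique4 parts adjs)
    moreover have "card {v1 m k, q1 m k, q2 m k, q3 m k} = 4"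
      using ne[OF n] by simp
    ultimately show ?thesis using h by (intro dim_ge) auto
  next
    assume h: "hd xs = q1 m k"
    have "clique n {q1 m k, q2 m k, r2 m k, r3 m k}"
      using n by (intro clique4 parts adjs)
    moreover have "card {q1 m k, q2 m k, r2 m k, r3 m k} = 4"
      using ne[OF n] by simp
    ultimately show ?thesis using h by (intro dim_ge) auto
  qed
qed

end
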